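(* Let $n\geq 1$. Choose edges of the complete bipartite graph $K_{n,n}$ one at a time in a uniformly random order (without repetition), stopping as soon as every vertex has degree at least one; call the resulting random graph $G_\omega$. Then the expected number of perfect matchings contained in $G_\omega$ is $$n!\left(\frac{2}{\binom{2n-1}{n}} - \frac{1}{\binom{3n-2}{n}}\right).$$
   Context: Precisely: a uniformly random ordering $(e_1,\dots,e_{n^2})$ of the edges of $K_{n,n}$ is chosen, $k$ is the least index such that the graph on all $2n$ vertices with edges $e_1,\dots,e_k$ has no isolated vertex, and $G_\omega$ is that graph. A perfect matching is a set of edges such that every vertex lies in exactly one of them. *)

theory Defs
  imports "HOL-Probability.Probability" "HOL-Combinatorics.Multiset_Permutations"
begin

text \<open>Vertices of K_{n,n}: left vertices i < n and right vertices j < n.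
  An edge is a pair (i, j) joining left vertex i to right vertex j.\<close>

definition Knn_edges :: "nat \<Rightarrow> (nat \<times> nat) set" where
  "Knn_edges n = {..<n} \<times> {..<n}"

definition no_isolated :: "nat \<Rightarrow> (nat \<times> nat) set \<Rightarrow> bool" where
  "no_isolated n F \<longleftrightarrow> (\<forall>i<n. \<exists>j. (i, j) \<in> F) \<and> (\<forall>j<n. \<exists>i. (i, j) \<in> F)"

definition perfect_matching :: "nat \<Rightarrow> (nat \<times> nat) set \<Rightarrow> bool" where
  "perfect_matching n M \<longleftrightarrow> M \<subseteq> Knn_edges n \<and>
     (\<forall>i<n. \<exists>!j. (i, j) \<in> M) \<and> (\<forall>j<n. \<exists>!i. (i, j) \<in> M)"

definition num_pm :: "nat \<Rightarrow> (nat \<times> nat) set \<Rightarrow> nat" where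
  "num_pm n F = card {M. M \<subseteq> F \<and> perfect_matching n M}"

definition stop_index :: "nat \<Rightarrow> (nat \<times> nat) list \<Rightarrow> nat" where
  "stop_index n xs = (LEAST k. no_isolated n (set (take k xs)))"

definition G_omega :: "nat \<Rightarrow> (nat \<times> nat) list \<Rightarrow> (nat \<times> nat) set" where
  "G_omega n xs = set (take (stop_index n xs) xs)"

end

theory Submission
  imports Defs
begin


definition bef :: "'a set \<Rightarrow> 'a set \<Rightarrow> 'a list \<Rightarrow> bool" where
  "bef S T xs \<longleftrightarrow> (\<exists>k. S \<subseteq> set (take k xs) \<and> T \<inter> set (take k xs) = {})"

lemma bef_empty[simp]: "bef {} T xs"
  unfolding bef_def by (rule exI[of _ 0]) simp

lemma bef_Cons: "bef S T (x # ys) \<longleftrightarrow> S = {} \<or> (x \<notin> T \<and> bef (S - {x}) T ys)"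
proof
  assume "bef S T (x # ys)"
  then obtain k where k: "S \<subseteq> set (take k (x # ys))" "T \<inter> set (take k (x # ys)) = {}"
    unfolding bef_def by blast
  show "S = {} \<or> (x \<notin> T \<and> bef (S - {x}) T ys)"
  proof (cases k)
    case 0 then show ?thesis using k by simp
  next
    case (Suc k') then show ?thesis using k unfolding bef_def by (intro disjI2 conjI exI[of _ k']) auto
  qed
next
  assume "S = {} \<or> (x \<notin> T \<and> bef (S - {x}) T ys)"
  then show "bef S T (x # ys)"
  proof
    assume "x \<notin> T \<and> bef (S - {x}) T ys"
    then obtain k where k: "S - {x} \<subseteq> set (take k ys)" "T \<inter> set (take k ys) = {}" "x \<notin> T"
      unfolding bef_def by blast
    then show ?thesis unfolding bef_def by (intro exI[of _ "Suc k"]) auto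
  qed simp
qed

lemma bef_Cons_out: "x \<notin> S \<Longrightarrow> x \<notin> T \<Longrightarrow> bef S T (x # ys) = bef S T ys"
  by (cases "S = {}") (auto simp: bef_Cons)

lemma bef_Cons_in: "x \<in> S \<Longrightarrow> x \<notin> T \<Longrightarrow> bef S T (x # ys) = bef (S - {x}) T ys"
  by (auto simp: bef_Cons)

lemma bef_Cons_bad: "S \<noteq> {} \<Longrightarrow> x \<in> T \<Longrightarrow> \<not> bef S T (x # ys)"
  by (auto simp: bef_Cons)

lemma card_perms_split:
  assumes "finite A" "A \<noteq> {}"
  shows "card {xs \<in> permutations_of_set A. P xs} =
         (\<Sum>x\<in>A. card {ys \<in> permutations_of_set (A - {x}). P (x # ys)})"
proof -
  have "{xs \<in> permutations_of_set A. P xs} =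
        (\<Union>x\<in>A. (\<lambda>ys. x # ys) ` {ys \<in> permutations_of_set (A - {x}). P (x # ys)})"
    using permutations_of_set_nonempty[OF assms(2)] by auto
  also have "card \<dots> = (\<Sum>x\<in>A. card ((\<lambda>ys. x # ys) ` {ys \<in> permutations_of_set (A - {x}). P (x # ys)}))"
    by (rule card_UN_disjoint) (auto simp: assms)
  also have "\<dots> = (\<Sum>x\<in>A. card {ys \<in> permutations_of_set (A - {x}). P (x # ys)})"
    by (intro sum.cong refl card_image) (auto simp: inj_on_def)
  finally show ?thesis .
qed

lemma fact_pred: "k \<ge> 1 \<Longrightarrow> fact k = k * fact (k - 1)"
  by (metis Suc_diff_1 fact_Suc less_eq_Suc_le One_nat_def of_nat_id)

lemma count_bef:
  assumes "finite A" "S1 \<subseteq> S2" "S2 \<subseteq> C" "C \<subseteq> A"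
  shows "card {xs \<in> permutations_of_set A. bef S1 (C - S1) xs \<and> bef S2 (C - S2) xs} * fact (card C)
       = fact (card A) * fact (card S1) * fact (card S2 - card S1) * fact (card C - card S2)"
  using assms
proof (induction "card A" arbitrary: A S1 S2 C)
  case 0
  then have "A = {}" by simp
  with 0 show ?case by simp
next
  case (Suc m)
  note IH = Suc.hyps(1)
  have finA: "finite A" using Suc.prems(1) .
  have finC: "finite C" "finite S1" "finite S2" using Suc.prems finite_subset by (metis, metis, metis)
  have Ane: "A \<noteq> {}" using Suc.hyps(2) by auto
  define Q :: "'a set \<Rightarrow> 'a set \<Rightarrow> 'a set \<Rightarrow> 'a list \<Rightarrow> bool" where "Q = (\<lambda>S1 S2 C xs. bef S1 (C - S1) xs \<and> bef S2 (C - S2) xs)"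
  define g where "g = (\<lambda>x. card {ys \<in> permutations_of_set (A - {x}). Q S1 S2 C (x # ys)})"
  define K :: nat where "K = fact (card S1) * fact (card S2 - card S1) * fact (card C - card S2)"
  have split: "card {xs \<in> permutations_of_set A. Q S1 S2 C xs} = (\<Sum>x\<in>A. g x)"
    unfolding g_def by (rule card_perms_split[OF finA Ane])
  have cA: "card A = Suc m" using Suc.hyps(2) by simp
  have cAx: "x \<in> A \<Longrightarrow> card (A - {x}) = m" for x using cA finA by simp
  have g1: "g x * fact (card C) = fact m * K" if x: "x \<in> A - C" for x
  proof -
    have xn: "x \<notin> S1" "x \<notin> S2" "x \<notin> C - S1" "x \<notin> C - S2" using x Suc.prems by auto
    have "Q S1 S2 C (x # ys) = Q S1 S2 C ys" for ys unfolding Q_def using xn by (simp add: bef_Cons_out)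
    then have "g x = card {ys \<in> permutations_of_set (A - {x}). Q S1 S2 C ys}"
      unfolding g_def by simp
    moreover have "card {ys \<in> permutations_of_set (A - {x}). bef S1 (C - S1) ys \<and> bef S2 (C - S2) ys} * fact (card C) = fact (card (A - {x})) * fact (card S1) * fact (card S2 - card S1) * fact (card C - card S2)"
      by (rule IH) (use x Suc.prems cAx[of x] finA in auto)
    ultimately show ?thesis using cAx[of x] x unfolding Q_def K_def by (simp add: mult.assoc)
  qed
  show ?case
  proof (cases "S2 = {}")
    case True
    then have "S1 = {}" using Suc.prems by auto
    with True show ?thesis using finA by simp
  next
    case S2ne: False
    show ?thesis
    proof (cases "S1 = {}")
      case S1e: True
      have g0: "g x = 0" if "x \<in> C - S2" for x
        unfolding g_def Q_def using that S2ne bef_Cons_bad[OF S2ne, of x "C - S2"] by simp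
      have g2: "g x * fact (card C - 1) = fact m * fact (card S2 - 1) * fact (card C - card S2)"
        if x: "x \<in> S2" for x
      proof -
        have e1: "(C - {x}) - (S2 - {x}) = C - S2" using x by auto
        have xn: "x \<notin> C - S2" using x by auto
        have "Q S1 S2 C (x # ys) = Q {} (S2 - {x}) (C - {x}) ys" for ys
          unfolding Q_def e1 using S1e bef_Cons_in[OF x xn] by simp
        then have "g x = card {ys \<in> permutations_of_set (A - {x}). Q {} (S2 - {x}) (C - {x}) ys}"
          unfolding g_def by simp
        moreover have "card {ys \<in> permutations_of_set (A - {x}). bef {} ((C - {x}) - {}) ys \<and> bef (S2 - {x}) ((C - {x}) - (S2 - {x})) ys} * fact (card (C - {x})) = fact (card (A - {x})) * fact (card ({}::'a set)) * fact (card (S2 - {x}) - card ({}::'a set)) * fact (card (C - {x}) - card (S2 - {x}))"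
          by (rule IH) (use x Suc.prems cAx[of x] finA in auto)
        moreover have "card (C - {x}) = card C - 1" "card (S2 - {x}) = card S2 - 1" "card C - 1 - (card S2 - 1) = card C - card S2"
          using x finC Suc.prems card_mono[OF finC(1) Suc.prems(3)] card_Diff1_less[OF finC(3) x] by (auto simp: card_Diff_singleton subsetD card_gt_0_iff)
        ultimately show ?thesis using cAx[of x] x Suc.prems unfolding Q_def by auto
      qed
      have cC: "card C \<ge> 1" "card S2 \<le> card C" "card C \<le> Suc m"
        using S2ne Suc.prems finC card_mono[OF finC(1) Suc.prems(3)] card_mono[OF finA Suc.prems(4)] cA
        by (auto simp: Suc_le_eq card_gt_0_iff)
      have sA: "(\<Sum>x\<in>A. g x) = (\<Sum>x\<in>A - C. g x) + ((\<Sum>x\<in>C - S2. g x) + (\<Sum>x\<in>S2. g x))"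
        using finA finC Suc.prems by (metis add.commute sum.subset_diff)
      have s1: "(\<Sum>x\<in>A - C. g x) * fact (card C) = (Suc m - card C) * (fact m * K)"
        unfolding sum_distrib_right using g1 finA Suc.prems cA
        by (simp add: card_Diff_subset finite_subset)
      have s2: "(\<Sum>x\<in>S2. g x) * fact (card C) = card C * (fact m * K)"
      proof -
        have "(\<Sum>x\<in>S2. g x) * fact (card C) = (\<Sum>x\<in>S2. card C * (fact m * fact (card S2 - 1) * fact (card C - card S2)))"
          unfolding sum_distrib_right
          by (intro sum.cong refl) (metis g2 fact_pred[OF cC(1)] mult.assoc mult.commute)
        also have "\<dots> = card C * (fact m * K)"
          using fact_pred[of "card S2"] S2ne finC unfolding K_def S1e
          by (simp add: card_gt_0_iff Suc_le_eq)
        finally show ?thesis .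
      qed
      have "card {xs \<in> permutations_of_set A. Q S1 S2 C xs} * fact (card C) = (Suc m - card C + card C) * (fact m * K)"
        unfolding split sA using g0 s1 s2 by (simp add: algebra_simps)
      also have "\<dots> = fact (card A) * K" using cC cA by (simp add: algebra_simps)
      finally show ?thesis unfolding Q_def K_def by (simp add: mult.assoc)
    next
      case S1ne: False
      have g0: "g x = 0" if "x \<in> C - S1" for x
        unfolding g_def Q_def using that bef_Cons_bad[OF S1ne, of x "C - S1"] by simp
      have g2: "g x * fact (card C - 1) = fact m * fact (card S1 - 1) * fact (card S2 - card S1) * fact (card C - card S2)"
        if x: "x \<in> S1" for x
      proof -
        have e1: "(C - {x}) - (S2 - {x}) = C - S2" "(C - {x}) - (S1 - {x}) = C - S1" using x Suc.prems by auto
        have x2: "x \<in> S2" using x Suc.prems by auto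
        have xA: "x \<in> A" using x Suc.prems by auto
        have xn: "x \<notin> C - S2" "x \<notin> C - S1" using x Suc.prems by auto
        have "Q S1 S2 C (x # ys) = Q (S1 - {x}) (S2 - {x}) (C - {x}) ys" for ys
          unfolding Q_def e1 using bef_Cons_in[OF x xn(2)] bef_Cons_in[OF x2 xn(1)] by simp
        then have "g x = card {ys \<in> permutations_of_set (A - {x}). Q (S1 - {x}) (S2 - {x}) (C - {x}) ys}"
          unfolding g_def by simp
        moreover have "card {ys \<in> permutations_of_set (A - {x}). bef (S1 - {x}) ((C - {x}) - (S1 - {x})) ys \<and> bef (S2 - {x}) ((C - {x}) - (S2 - {x})) ys} * fact (card (C - {x})) = fact (card (A - {x})) * fact (card (S1 - {x})) * fact (card (S2 - {x}) - card (S1 - {x})) * fact (card (C - {x}) - card (S2 - {x}))"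
          by (rule IH) (use x Suc.prems cAx[OF xA] finA in auto)
        moreover have "card (C - {x}) = card C - 1" "card (S2 - {x}) = card S2 - 1" "card (S1 - {x}) = card S1 - 1"
          "card C - 1 - (card S2 - 1) = card C - card S2" "card S2 - 1 - (card S1 - 1) = card S2 - card S1"
          using x x2 finC Suc.prems card_mono[OF finC(1) Suc.prems(3)] card_mono[OF finC(3) Suc.prems(2)] card_Diff1_less[OF finC(2) x] card_Diff1_less[OF finC(3) x2]
          by (auto simp: card_Diff_singleton subsetD card_gt_0_iff)
        ultimately show ?thesis using cAx[OF xA] x Suc.prems unfolding Q_def by auto
      qed
      have cC: "card C \<ge> 1" "card S2 \<le> card C" "card C \<le> Suc m"
        using S2ne Suc.prems finC card_mono[OF finC(1) Suc.prems(3)] card_mono[OF finA Suc.prems(4)] cA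
        by (auto simp: Suc_le_eq card_gt_0_iff)
      have sA: "(\<Sum>x\<in>A. g x) = (\<Sum>x\<in>A - C. g x) + ((\<Sum>x\<in>C - S1. g x) + (\<Sum>x\<in>S1. g x))"
        using finA finC Suc.prems by (metis add.commute sum.subset_diff order_trans)
      have s1: "(\<Sum>x\<in>A - C. g x) * fact (card C) = (Suc m - card C) * (fact m * K)"
        unfolding sum_distrib_right using g1 finA Suc.prems cA
        by (simp add: card_Diff_subset finite_subset)
      have s2: "(\<Sum>x\<in>S1. g x) * fact (card C) = card C * (fact m * K)"
      proof -
        have "(\<Sum>x\<in>S1. g x) * fact (card C) = (\<Sum>x\<in>S1. card C * (fact m * fact (card S1 - 1) * fact (card S2 - card S1) * fact (card C - card S2)))"
          unfolding sum_distrib_right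
          by (intro sum.cong refl) (metis g2 fact_pred[OF cC(1)] mult.assoc mult.commute)
        also have "\<dots> = card C * (fact m * K)"
          using fact_pred[of "card S1"] S1ne finC unfolding K_def
          by (simp add: card_gt_0_iff Suc_le_eq)
        finally show ?thesis .
      qed
      have "card {xs \<in> permutations_of_set A. Q S1 S2 C xs} * fact (card C) = (Suc m - card C + card C) * (fact m * K)"
        unfolding split sA using g0 s1 s2 by (simp add: algebra_simps)
      also have "\<dots> = fact (card A) * K" using cC cA by (simp add: algebra_simps)
      finally show ?thesis unfolding Q_def K_def by (simp add: mult.assoc)
    qed
  qed
qed



definition Rw :: "nat \<Rightarrow> nat \<times> nat \<Rightarrow> (nat \<times> nat) set" where
  "Rw n e = {(fst e, j') | j'. j' < n \<and> j' \<noteq> snd e}"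
definition Cl :: "nat \<Rightarrow> nat \<times> nat \<Rightarrow> (nat \<times> nat) set" where
  "Cl n e = {(i', snd e) | i'. i' < n \<and> i' \<noteq> fst e}"

definition EvR where "EvR n M e xs \<longleftrightarrow> bef (M - {e}) ({e} \<union> Rw n e) xs \<and> bef M (Rw n e) xs"
definition EvC where "EvC n M e xs \<longleftrightarrow> bef (M - {e}) ({e} \<union> Cl n e) xs \<and> bef M (Cl n e) xs"

lemma pm_covers: "perfect_matching n M \<Longrightarrow> no_isolated n M"
  unfolding perfect_matching_def no_isolated_def by blast

lemma no_isolated_mono: "no_isolated n F \<Longrightarrow> F \<subseteq> F' \<Longrightarrow> no_isolated n F'"
  unfolding no_isolated_def by blast

lemma link:
  assumes n: "n \<ge> 1" and xs: "xs \<in> permutations_of_set (Knn_edges n)" and M: "perfect_matching n M"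
  shows "M \<subseteq> G_omega n xs \<longleftrightarrow> (\<exists>e\<in>M. EvR n M e xs \<or> EvC n M e xs)"
proof -
  have setxs: "set xs = Knn_edges n" using xs by (simp add: permutations_of_set_def)
  have MK: "M \<subseteq> Knn_edges n" using M unfolding perfect_matching_def by blast
  have full: "no_isolated n (set (take (length xs) xs))"
    using n by (force simp: setxs no_isolated_def Knn_edges_def)
  define t where "t = stop_index n xs"
  have t_ok: "no_isolated n (set (take t xs))"
    unfolding t_def stop_index_def by (rule LeastI[of _ "length xs"]) (rule full)
  have t_le: "t \<le> length xs"
    unfolding t_def stop_index_def by (rule Least_le) (rule full)
  have t_min: "\<not> no_isolated n (set (take k xs))" if "k < t" for k
    using not_less_Least[of k "\<lambda>k. no_isolated n (set (take k xs))"] that unfolding t_def stop_index_def by blast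
  have G: "G_omega n xs = set (take t xs)" unfolding G_omega_def t_def ..
  have tk: "set (take k xs) \<subseteq> Knn_edges n" for k using setxs by (metis set_take_subset)
  have mono: "k \<le> k' \<Longrightarrow> set (take k xs) \<subseteq> set (take k' xs)" for k k'
    by (rule set_take_subset_set_take)
  show ?thesis
  proof
    assume "\<exists>e\<in>M. EvR n M e xs \<or> EvC n M e xs"
    then obtain e where eM: "e \<in> M" and ev: "EvR n M e xs \<or> EvC n M e xs" by blast
    obtain i j where e: "e = (i, j)" by (cases e)
    have ij: "i < n" "j < n" using eM MK e by (auto simp: Knn_edges_def)
    have key: "M \<subseteq> set (take k xs)" if ni: "no_isolated n (set (take k xs))" for k
      using ev
    proof
      assume "EvR n M e xs"
      then obtain k1 k2 where k1: "M - {e} \<subseteq> set (take k1 xs)" "({e} \<union> Rw n e) \<inter> set (take k1 xs) = {}"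
        and k2: "M \<subseteq> set (take k2 xs)" "Rw n e \<inter> set (take k2 xs) = {}"
        unfolding EvR_def bef_def by blast
      obtain j' where j': "(i, j') \<in> set (take k xs)" using ni ij unfolding no_isolated_def by blast
      have "j' < n" using tk[of k] j' by (auto simp: Knn_edges_def)
      show ?thesis
      proof (cases "j' = j")
        case True
        then have "\<not> k \<le> k1" using k1(2) j' e mono[of k k1] by auto
        then show ?thesis using mono[of k1 k] k1(1) True j' e by auto
      next
        case False
        then have "(i, j') \<in> Rw n e" using \<open>j' < n\<close> e by (auto simp: Rw_def)
        then have "\<not> k \<le> k2" using k2(2) j' mono[of k k2] by auto
        then show ?thesis using mono[of k2 k] k2(1) by auto
      qed
    next
      assume "EvC n M e xs"
      then obtain k1 k2 where k1: "M - {e} \<subseteq> set (take k1 xs)" "({e} \<union> Cl n e) \<inter> set (take k1 xs) = {}"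
        and k2: "M \<subseteq> set (take k2 xs)" "Cl n e \<inter> set (take k2 xs) = {}"
        unfolding EvC_def bef_def by blast
      obtain i' where i': "(i', j) \<in> set (take k xs)" using ni ij unfolding no_isolated_def by blast
      have "i' < n" using tk[of k] i' by (auto simp: Knn_edges_def)
      show ?thesis
      proof (cases "i' = i")
        case True
        then have "\<not> k \<le> k1" using k1(2) i' e mono[of k k1] by auto
        then show ?thesis using mono[of k1 k] k1(1) True i' e by auto
      next
        case False
        then have "(i', j) \<in> Cl n e" using \<open>i' < n\<close> e by (auto simp: Cl_def)
        then have "\<not> k \<le> k2" using k2(2) i' mono[of k k2] by auto
        then show ?thesis using mono[of k2 k] k2(1) by auto
      qed
    qed
    show "M \<subseteq> G_omega n xs" unfolding G using key[OF t_ok] .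
  next
    assume MG: "M \<subseteq> G_omega n xs"
    have t0: "t \<noteq> 0"
    proof
      assume "t = 0"
      then show False using t_ok n unfolding no_isolated_def by auto
    qed
    define e where "e = xs ! (t - 1)"
    define T where "T = set (take (t - 1) xs)"
    have tl: "t - 1 < length xs" using t0 t_le by simp
    have "take t xs = take (t - 1) xs @ [xs ! (t - 1)]"
      using take_Suc_conv_app_nth[OF tl] t0 by simp
    then have tT: "set (take t xs) = insert e T"
      unfolding e_def T_def by simp
    have MT: "M \<subseteq> insert e T" using MG G tT by simp
    have "\<not> no_isolated n T" unfolding T_def using t_min t0 by simp
    then have "(\<exists>i<n. \<forall>j. (i, j) \<notin> T) \<or> (\<exists>j<n. \<forall>i. (i, j) \<notin> T)"
      unfolding no_isolated_def by blast
    then show "\<exists>e\<in>M. EvR n M e xs \<or> EvC n M e xs"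
    proof
      assume "\<exists>i<n. \<forall>j. (i, j) \<notin> T"
      then obtain i where i: "i < n" "\<And>j. (i, j) \<notin> T" by blast
      obtain j where j: "(i, j) \<in> M" using M i unfolding perfect_matching_def by blast
      have ee: "e = (i, j)" using MT j i by auto
      have "EvR n M e xs"
        unfolding EvR_def bef_def
      proof
        show "\<exists>k. M - {e} \<subseteq> set (take k xs) \<and> ({e} \<union> Rw n e) \<inter> set (take k xs) = {}"
        proof -
          have "M - {e} \<subseteq> T \<and> ({e} \<union> Rw n e) \<inter> T = {}" using MT i ee by (auto simp: Rw_def)
          then show ?thesis unfolding T_def by blast
        qed
        show "\<exists>k. M \<subseteq> set (take k xs) \<and> Rw n e \<inter> set (take k xs) = {}"
          using MT i ee by (intro exI[of _ t]) (auto simp: tT Rw_def)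
      qed
      then show ?thesis using j ee by blast
    next
      assume "\<exists>j<n. \<forall>i. (i, j) \<notin> T"
      then obtain j where j: "j < n" "\<And>i. (i, j) \<notin> T" by blast
      obtain i where i: "(i, j) \<in> M" using M j unfolding perfect_matching_def by blast
      have ee: "e = (i, j)" using MT j i by auto
      have "EvC n M e xs"
        unfolding EvC_def bef_def
      proof
        show "\<exists>k. M - {e} \<subseteq> set (take k xs) \<and> ({e} \<union> Cl n e) \<inter> set (take k xs) = {}"
        proof -
          have "M - {e} \<subseteq> T \<and> ({e} \<union> Cl n e) \<inter> T = {}" using MT j ee by (auto simp: Cl_def)
          then show ?thesis unfolding T_def by blast
        qed
        show "\<exists>k. M \<subseteq> set (take k xs) \<and> Cl n e \<inter> set (take k xs) = {}"
          using MT j ee by (intro exI[of _ t]) (auto simp: tT Cl_def)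
      qed
      then show ?thesis using i ee by blast
    qed
  qed
qed



definition graphp :: "nat \<Rightarrow> (nat \<Rightarrow> nat) \<Rightarrow> (nat \<times> nat) set" where
  "graphp n p = (\<lambda>i. (i, p i)) ` {..<n}"

lemma pm_finite: "finite {M. perfect_matching n M}"
proof -
  have "{M. perfect_matching n M} \<subseteq> Pow (Knn_edges n)" unfolding perfect_matching_def by auto
  moreover have "finite (Knn_edges n)" unfolding Knn_edges_def by simp
  ultimately show ?thesis by (meson finite_Pow_iff finite_subset)
qed

lemma card_pm: "card {M. perfect_matching n M} = fact n"
proof -
  have "bij_betw (graphp n) {p. p permutes {..<n}} {M. perfect_matching n M}"
    unfolding bij_betw_def
  proof
    show "inj_on (graphp n) {p. p permutes {..<n}}"
    proof (rule inj_onI)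
      fix p q assume p: "p \<in> {p. p permutes {..<n}}" and q: "q \<in> {p. p permutes {..<n}}"
        and eq: "graphp n p = graphp n q"
      show "p = q"
      proof
        fix i show "p i = q i"
        proof (cases "i < n")
          case True
          then have "(i, p i) \<in> graphp n q" using eq unfolding graphp_def by auto
          then show ?thesis unfolding graphp_def by auto
        next
          case False
          then show ?thesis using p q unfolding permutes_def by auto
        qed
      qed
    qed
  next
    show "graphp n ` {p. p permutes {..<n}} = {M. perfect_matching n M}"
    proof (rule set_eqI, rule iffI)
      fix M assume "M \<in> graphp n ` {p. p permutes {..<n}}"
      then obtain p where p: "p permutes {..<n}" and M: "M = graphp n p" by auto
      have img: "i < n \<Longrightarrow> p i < n" for i using permutes_in_image[OF p] by simp
      have sur: "\<exists>i<n. p i = j" if "j < n" for j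
      proof -
        have "j \<in> p ` {..<n}" using permutes_image[OF p] that by simp
        then show ?thesis by auto
      qed
      have inj: "p a = p b \<Longrightarrow> a = b" for a b using permutes_inj[OF p] by (simp add: inj_eq)
      have mem: "(i, j) \<in> M \<longleftrightarrow> i < n \<and> j = p i" for i j unfolding M graphp_def by auto
      have c1: "M \<subseteq> Knn_edges n" unfolding Knn_edges_def using mem img by auto
      have c2: "\<forall>i<n. \<exists>!j. (i, j) \<in> M" unfolding mem by simp
      have c3: "\<forall>j<n. \<exists>!i. (i, j) \<in> M" unfolding mem using sur inj by blast
      show "M \<in> {M. perfect_matching n M}"
        unfolding perfect_matching_def using c1 c2 c3 by simp
    next
      fix M assume "M \<in> {M. perfect_matching n M}"
      then have M: "perfect_matching n M" by simp
      have MK: "M \<subseteq> {..<n} \<times> {..<n}" using M unfolding perfect_matching_def Knn_edges_def by blast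
      define p where "p i = (if i < n then (THE j. (i, j) \<in> M) else i)" for i
      have pM: "(i, p i) \<in> M" if i: "i < n" for i
      proof -
        have "\<exists>!j. (i, j) \<in> M" using M i unfolding perfect_matching_def by blast
        then have "(i, THE j. (i, j) \<in> M) \<in> M" by (rule theI')
        then show ?thesis using i unfolding p_def by simp
      qed
      have pu: "i < n \<Longrightarrow> (i, j) \<in> M \<Longrightarrow> p i = j" for i j
        using M pM unfolding perfect_matching_def by blast
      have "bij_betw p {..<n} {..<n}"
        unfolding bij_betw_def
      proof
        show "inj_on p {..<n}"
        proof (rule inj_onI)
          fix a b assume a: "a \<in> {..<n}" and b: "b \<in> {..<n}" and e: "p a = p b"
          have "(a, p a) \<in> M" "(b, p a) \<in> M" using pM[of a] pM[of b] a b e by auto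
          moreover have "p a < n" using pM a MK by blast
          ultimately show "a = b" using M unfolding perfect_matching_def by blast
        qed
        show "p ` {..<n} = {..<n}"
        proof (rule set_eqI, rule iffI)
          fix j assume "j \<in> p ` {..<n}" then show "j \<in> {..<n}" using pM MK by blast
        next
          fix j assume j: "j \<in> {..<n}"
          then obtain i where "(i, j) \<in> M" using M unfolding perfect_matching_def by auto
          moreover then have "i < n" using MK by blast
          ultimately show "j \<in> p ` {..<n}" using pu by blast
        qed
      qed
      then have pp: "p permutes {..<n}" by (rule bij_imp_permutes) (simp add: p_def)
      have "graphp n p = M"
      proof (rule set_eqI)
        fix x show "x \<in> graphp n p \<longleftrightarrow> x \<in> M"
        proof (cases x)
          case (Pair a b)
          then show ?thesis unfolding graphp_def using pM pu MK by blast
        qed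
      qed
      then show "M \<in> graphp n ` {p. p permutes {..<n}}" using pp by blast
    qed
  qed
  then have "card {M. perfect_matching n M} = card {p. p permutes {..<n}}"
    by (simp add: bij_betw_same_card)
  also have "\<dots> = fact n" by (rule card_permutations) simp_all
  finally show ?thesis .
qed



lemma bef_mono: "bef S T xs \<Longrightarrow> S' \<subseteq> S \<Longrightarrow> T' \<subseteq> T \<Longrightarrow> bef S' T' xs"
  unfolding bef_def by blast

lemma bef_antisym: "bef {a} {b} xs \<Longrightarrow> bef {b} {a} xs \<Longrightarrow> False"
proof -
  assume "bef {a} {b} xs" "bef {b} {a} xs"
  then obtain k1 k2 where k1: "a \<in> set (take k1 xs)" "b \<notin> set (take k1 xs)"
    and k2: "b \<in> set (take k2 xs)" "a \<notin> set (take k2 xs)" unfolding bef_def by blast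
  show False
  proof (cases "k1 \<le> k2")
    case True then show False using k1 k2 set_take_subset_set_take[of k1 k2 xs] by blast
  next
    case False then show False using k1 k2 set_take_subset_set_take[of k2 k1 xs] by auto
  qed
qed

lemma bef_Un: "(bef S T1 xs \<and> bef S T2 xs) = bef S (T1 \<union> T2) xs"
proof
  assume "bef S T1 xs \<and> bef S T2 xs"
  then obtain k1 k2 where k1: "S \<subseteq> set (take k1 xs)" "T1 \<inter> set (take k1 xs) = {}"
    and k2: "S \<subseteq> set (take k2 xs)" "T2 \<inter> set (take k2 xs) = {}" unfolding bef_def by blast
  define k where "k = min k1 k2"
  have "set (take k xs) \<subseteq> set (take k1 xs)" "set (take k xs) \<subseteq> set (take k2 xs)"
    unfolding k_def by (simp_all add: set_take_subset_set_take)
  moreover have "take k xs = take k1 xs \<or> take k xs = take k2 xs" unfolding k_def by (simp add: min_def)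
  ultimately have "S \<subseteq> set (take k xs)" "(T1 \<union> T2) \<inter> set (take k xs) = {}" using k1 k2 by auto
  then show "bef S (T1 \<union> T2) xs" unfolding bef_def by blast
next
  assume "bef S (T1 \<union> T2) xs"
  then show "bef S T1 xs \<and> bef S T2 xs" using bef_mono by blast
qed

lemma pm_card: assumes "perfect_matching n M" shows "card M = n"
proof -
  have MK: "M \<subseteq> {..<n} \<times> {..<n}" using assms unfolding perfect_matching_def Knn_edges_def by blast
  have "bij_betw fst M {..<n}"
    unfolding bij_betw_def
  proof
    show "inj_on fst M"
    proof (rule inj_onI)
      fix x y assume "x \<in> M" "y \<in> M" "fst x = fst y"
      then show "x = y" using assms MK unfolding perfect_matching_def
        by (metis (no_types, lifting) lessThan_iff mem_Sigma_iff prod.collapse subsetD)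
    qed
    show "fst ` M = {..<n}"
    proof (rule set_eqI, rule iffI)
      fix i assume "i \<in> fst ` M" then show "i \<in> {..<n}" using MK by auto
    next
      fix i assume "i \<in> {..<n}"
      then obtain j where "(i, j) \<in> M" using assms unfolding perfect_matching_def by auto
      then show "i \<in> fst ` M" by force
    qed
  qed
  then show ?thesis by (simp add: bij_betw_same_card)
qed

lemma Rw_card: assumes "snd e < n" shows "card (Rw n e) = n - 1"
proof -
  have "Rw n e = (\<lambda>j'. (fst e, j')) ` ({..<n} - {snd e})" unfolding Rw_def by auto
  moreover have "card ((\<lambda>j'. (fst e, j')) ` ({..<n} - {snd e})) = n - 1"
    using assms by (subst card_image) (auto simp: inj_on_def)
  ultimately show ?thesis by simp
qed

lemma Cl_card: assumes "fst e < n" shows "card (Cl n e) = n - 1"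
proof -
  have "Cl n e = (\<lambda>i'. (i', snd e)) ` ({..<n} - {fst e})" unfolding Cl_def by auto
  moreover have "card ((\<lambda>i'. (i', snd e)) ` ({..<n} - {fst e})) = n - 1"
    using assms by (subst card_image) (auto simp: inj_on_def)
  ultimately show ?thesis by simp
qed

lemma Rw_Cl_disj: "Rw n e \<inter> Cl n e = {}" unfolding Rw_def Cl_def by auto

lemma Rw_K: "Rw n e \<subseteq> Knn_edges n" "Cl n e \<subseteq> Knn_edges n" if "e \<in> Knn_edges n"
  using that unfolding Rw_def Cl_def Knn_edges_def by auto

lemma M_Rw_disj: assumes "perfect_matching n M" "e \<in> M" shows "M \<inter> Rw n e = {}" "M \<inter> Cl n e = {}"
proof -
  obtain i j where e: "e = (i, j)" by (cases e)
  have ij: "i < n" "j < n" using assms e unfolding perfect_matching_def Knn_edges_def by auto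
  show "M \<inter> Rw n e = {}"
  proof (rule ccontr)
    assume "M \<inter> Rw n e \<noteq> {}"
    then obtain j' where "(i, j') \<in> M" "j' \<noteq> j" unfolding Rw_def e by auto
    then show False using assms e ij unfolding perfect_matching_def by blast
  qed
  show "M \<inter> Cl n e = {}"
  proof (rule ccontr)
    assume "M \<inter> Cl n e \<noteq> {}"
    then obtain i' where "(i', j) \<in> M" "i' \<noteq> i" unfolding Cl_def e by auto
    then show False using assms e ij unfolding perfect_matching_def by blast
  qed
qed

lemma cnt_X:
  assumes M: "perfect_matching n M" and e: "e \<in> M" and X: "X \<subseteq> Knn_edges n" "M \<inter> X = {}"
  shows "card {xs \<in> permutations_of_set (Knn_edges n). bef (M - {e}) ({e} \<union> X) xs \<and> bef M X xs}
           * fact (n + card X) = fact (n * n) * fact (n - 1) * fact (card X)"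
proof -
  have fK: "finite (Knn_edges n)" unfolding Knn_edges_def by simp
  have MK: "M \<subseteq> Knn_edges n" using M unfolding perfect_matching_def by blast
  have fM: "finite M" "finite X" using MK X fK finite_subset by blast+
  have cM: "card M = n" using pm_card[OF M] .
  have n1: "n \<ge> 1" using cM e fM by (metis One_nat_def Suc_leI card_gt_0_iff empty_iff)
  have e1: "(M \<union> X) - (M - {e}) = {e} \<union> X" "(M \<union> X) - M = X" using e X by auto
  have c1: "card (M \<union> X) = n + card X" using cM fM X by (simp add: card_Un_disjoint)
  have c2: "card (M - {e}) = n - 1" using cM fM e by simp
  have c3: "card (Knn_edges n) = n * n" unfolding Knn_edges_def by simp
  have "card {xs \<in> permutations_of_set (Knn_edges n). bef (M - {e}) ((M \<union> X) - (M - {e})) xs \<and> bef M ((M \<union> X) - M) xs}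
           * fact (card (M \<union> X)) = fact (card (Knn_edges n)) * fact (card (M - {e})) * fact (card M - card (M - {e})) * fact (card (M \<union> X) - card M)"
    by (rule count_bef) (use fK MK X in auto)
  then show ?thesis unfolding e1 c1 c2 c3 cM using n1 by simp
qed

abbreviation PP :: "nat \<Rightarrow> (nat \<times> nat) list set" where
  "PP n \<equiv> permutations_of_set (Knn_edges n)"

definition VV :: "nat \<Rightarrow> real" where
  "VV n = 2 * fact (n * n) * fact (n - 1) * fact (n - 1) / fact (2 * n - 1)
        - fact (n * n) * fact (n - 1) * fact (2 * n - 2) / fact (3 * n - 2)"

lemma cnt_e:
  assumes M: "perfect_matching n M" and e: "e \<in> M"
  shows "real (card ({xs \<in> PP n. EvR n M e xs} \<union> {xs \<in> PP n. EvC n M e xs})) = VV n"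
proof -
  have MK: "M \<subseteq> Knn_edges n" using M unfolding perfect_matching_def by blast
  have eK: "e \<in> Knn_edges n" using MK e by blast
  have es: "fst e < n" "snd e < n" using eK unfolding Knn_edges_def by auto
  have n1: "n \<ge> 1" using es by simp
  define R where "R = {xs \<in> PP n. EvR n M e xs}"
  define C where "C = {xs \<in> PP n. EvC n M e xs}"
  have cR: "card R * fact (n + (n - 1)) = fact (n * n) * fact (n - 1) * fact (n - 1)"
    unfolding R_def EvR_def using cnt_X[OF M e Rw_K(1)[OF eK] M_Rw_disj(1)[OF M e]] Rw_card[OF es(2)] by simp
  have cC: "card C * fact (n + (n - 1)) = fact (n * n) * fact (n - 1) * fact (n - 1)"
    unfolding C_def EvC_def using cnt_X[OF M e Rw_K(2)[OF eK] M_Rw_disj(2)[OF M e]] Cl_card[OF es(1)] by simp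
  have RC: "R \<inter> C = {xs \<in> PP n. bef (M - {e}) ({e} \<union> (Rw n e \<union> Cl n e)) xs \<and> bef M (Rw n e \<union> Cl n e) xs}"
    unfolding R_def C_def EvR_def EvC_def bef_Un[symmetric] by blast
  have cU: "card (Rw n e \<union> Cl n e) = 2 * n - 2"
    using Rw_card[OF es(2)] Cl_card[OF es(1)] Rw_Cl_disj[of n e] card_Un_disjoint[of "Rw n e" "Cl n e"]
      Rw_K[OF eK] finite_subset[of _ "Knn_edges n"] n1 unfolding Knn_edges_def by auto
  have cB: "card (R \<inter> C) * fact (n + (2 * n - 2)) = fact (n * n) * fact (n - 1) * fact (2 * n - 2)"
    unfolding RC using cnt_X[OF M e, of "Rw n e \<union> Cl n e"] Rw_K[OF eK] M_Rw_disj[OF M e] cU by auto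
  have ar: "n + (n - 1) = 2 * n - 1" "n + (2 * n - 2) = 3 * n - 2" using n1 by auto
  have fin: "finite R" "finite C" unfolding R_def C_def by simp_all
  have "card R + card C = card (R \<union> C) + card (R \<inter> C)" using card_Un_Int[OF fin] .
  then have "real (card (R \<union> C)) = real (card R) + real (card C) - real (card (R \<inter> C))"
    by (metis add_diff_cancel_right' of_nat_add)
  also have "real (card R) = fact (n * n) * fact (n - 1) * fact (n - 1) / fact (2 * n - 1)"
    using arg_cong[OF cR, of real] unfolding ar by (simp add: field_simps)
  also have "real (card C) = fact (n * n) * fact (n - 1) * fact (n - 1) / fact (2 * n - 1)"
    using arg_cong[OF cC, of real] unfolding ar by (simp add: field_simps)
  also have "real (card (R \<inter> C)) = fact (n * n) * fact (n - 1) * fact (2 * n - 2) / fact (3 * n - 2)"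
    using arg_cong[OF cB, of real] unfolding ar by (simp add: field_simps)
  finally show ?thesis unfolding R_def C_def VV_def by simp
qed

lemma cnt_M:
  assumes n: "n \<ge> 1" and M: "perfect_matching n M"
  shows "real (card {xs \<in> PP n. M \<subseteq> G_omega n xs}) = real n * VV n"
proof -
  have MK: "M \<subseteq> Knn_edges n" using M unfolding perfect_matching_def by blast
  have fM: "finite M" using MK finite_subset unfolding Knn_edges_def by blast
  define U where "U e = {xs \<in> PP n. EvR n M e xs} \<union> {xs \<in> PP n. EvC n M e xs}" for e
  have eq: "{xs \<in> PP n. M \<subseteq> G_omega n xs} = (\<Union>e\<in>M. U e)"
    unfolding U_def using link[OF n _ M] by blast
  have disj: "U e \<inter> U f = {}" if "e \<in> M" "f \<in> M" "e \<noteq> f" for e f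
  proof (rule ccontr)
    assume "U e \<inter> U f \<noteq> {}"
    then obtain xs where xe: "EvR n M e xs \<or> EvC n M e xs" and xf: "EvR n M f xs \<or> EvC n M f xs"
      unfolding U_def by blast
    have "bef {f} {e} xs" using xe that unfolding EvR_def EvC_def by (auto elim: bef_mono)
    moreover have "bef {e} {f} xs" using xf that unfolding EvR_def EvC_def by (auto elim: bef_mono)
    ultimately show False by (rule bef_antisym)
  qed
  have "card (\<Union>e\<in>M. U e) = (\<Sum>e\<in>M. card (U e))"
    by (rule card_UN_disjoint) (use fM disj in \<open>auto simp: U_def\<close>)
  then have "real (card {xs \<in> PP n. M \<subseteq> G_omega n xs}) = (\<Sum>e\<in>M. real (card (U e)))"
    unfolding eq by simp
  also have "\<dots> = (\<Sum>e\<in>M. VV n)" unfolding U_def using cnt_e[OF M] by simp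
  also have "\<dots> = real n * VV n" using pm_card[OF M] by simp
  finally show ?thesis .
qed

lemma sum_num_pm:
  assumes n: "n \<ge> 1"
  shows "(\<Sum>xs\<in>PP n. real (num_pm n (G_omega n xs))) = fact n * (real n * VV n)"
proof -
  define PMs where "PMs = {M. perfect_matching n M}"
  have fP: "finite PMs" unfolding PMs_def by (rule pm_finite)
  have "(\<Sum>xs\<in>PP n. real (num_pm n (G_omega n xs)))
        = (\<Sum>xs\<in>PP n. \<Sum>M\<in>PMs. if M \<subseteq> G_omega n xs then 1 else 0)"
  proof (rule sum.cong[OF refl])
    fix xs
    have "{M. M \<subseteq> G_omega n xs \<and> perfect_matching n M} = {M \<in> PMs. M \<subseteq> G_omega n xs}"
      unfolding PMs_def by auto
    then show "real (num_pm n (G_omega n xs)) = (\<Sum>M\<in>PMs. if M \<subseteq> G_omega n xs then 1 else 0)"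
      unfolding num_pm_def using fP by (simp add: sum.If_cases Int_def)
  qed
  also have "\<dots> = (\<Sum>M\<in>PMs. \<Sum>xs\<in>PP n. if M \<subseteq> G_omega n xs then 1 else 0)"
    by (rule sum.swap)
  also have "\<dots> = (\<Sum>M\<in>PMs. real (card {xs \<in> PP n. M \<subseteq> G_omega n xs}))"
    by (rule sum.cong[OF refl]) (simp add: sum.If_cases Int_def)
  also have "\<dots> = (\<Sum>M\<in>PMs. real n * VV n)"
    by (rule sum.cong[OF refl]) (use cnt_M[OF n] in \<open>simp add: PMs_def\<close>)
  also have "\<dots> = fact n * (real n * VV n)"
    using card_pm[of n] unfolding PMs_def by simp
  finally show ?thesis .
qed

theorem corollary1:
  fixes n :: nat
  assumes "n \<ge> 1"
  shows "measure_pmf.expectation (pmf_of_set (permutations_of_set (Knn_edges n)))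
           (\<lambda>xs. real (num_pm n (G_omega n xs)))
         = fact n * (2 / real ((2 * n - 1) choose n) - 1 / real ((3 * n - 2) choose n))"
proof -
  have fK: "finite (Knn_edges n)" unfolding Knn_edges_def by simp
  have cK: "card (Knn_edges n) = n * n" unfolding Knn_edges_def by simp
  have ne: "PP n \<noteq> {}" using fK by simp
  have "measure_pmf.expectation (pmf_of_set (PP n)) (\<lambda>xs. real (num_pm n (G_omega n xs)))
        = (\<Sum>xs\<in>PP n. real (num_pm n (G_omega n xs))) / real (card (PP n))"
    by (rule integral_pmf_of_set[OF ne]) simp
  also have "\<dots> = fact n * (real n * VV n) / fact (n * n)"
    unfolding sum_num_pm[OF assms] using fK cK by simp
  also have "\<dots> = fact n * (2 / real ((2 * n - 1) choose n) - 1 / real ((3 * n - 2) choose n))"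
  proof -
    have l1: "n \<le> 2 * n - 1" "2 * n - 1 - n = n - 1" using assms by auto
    have l2: "n \<le> 3 * n - 2" "3 * n - 2 - n = 2 * n - 2" using assms by auto
    have b1: "real ((2 * n - 1) choose n) = fact (2 * n - 1) / (fact n * fact (n - 1))"
      using binomial_fact[OF l1(1), where 'a=real] unfolding l1(2) .
    have b2: "real ((3 * n - 2) choose n) = fact (3 * n - 2) / (fact n * fact (2 * n - 2))"
      using binomial_fact[OF l2(1), where 'a=real] unfolding l2(2) .
    have fn: "(fact n :: real) = real n * fact (n - 1)" using fact_reduce[of n] assms by simp
    show ?thesis unfolding b1 b2 VV_def fn by (simp add: field_simps)
  qed
  finally show ?thesis .
qed


end
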